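(* Let $X$, $Z$ be topological vector spaces, $C\subseteq Z$ a nonempty closed convex cone with $C^-\neq\{0\}$, and $f:X\to\mathcal{F}(Z,C)$. If $f$ is Hausdorff upper continuous at $x_0\in X$, then for every $z^*\in Z^*$ the scalarization $\varphi_{(f,z^* )}:X\to\overline{\mathbb{R}}$ is lower semicontinuous at $x_0$.
   Context: $\mathcal{F}(Z,C)=\{A\subseteq Z\colon A=\operatorname{cl}(A+C)\}$ (empty set included); $C^-=\{z^*\in Z^*\colon z^*(z)\le0\ \forall z\in C\}$. $\varphi_{(f,z^* )}(x)=\inf_{z\in f(x)}(-z^*(z))$, with $\inf\emptyset=+\infty$. $f$ is Hausdorff upper continuous at $x_0$ iff for every neighborhood $V$ of $0$ in $Z$ there is a neighborhood $U$ of $x_0$ with $f(x)\subseteq f(x_0)+V$ for all $x\in U$. *)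

theory Defs
  imports "HOL-Analysis.Analysis"
begin

class topological_real_vector = real_vector + topological_ab_group_add +
  assumes continuous_scaleR_pair:
    "\<And>(a::real) (x::'a) W. open W \<Longrightarrow> a *\<^sub>R x \<in> W \<Longrightarrow>
       \<exists>e>0. \<exists>U. open U \<and> x \<in> U \<and> (\<forall>b y. \<bar>b - a\<bar> < e \<longrightarrow> y \<in> U \<longrightarrow> b *\<^sub>R y \<in> W)"

definition topo_dual :: "('z::topological_real_vector \<Rightarrow> real) set" where
  "topo_dual = {g. linear g \<and> continuous_on UNIV g}"

definition neg_polar :: "'z::topological_real_vector set \<Rightarrow> ('z \<Rightarrow> real) set" where
  "neg_polar C = {g \<in> topo_dual. \<forall>z\<in>C. g z \<le> 0}"

text \<open>F(Z,C) = {A \<subseteq> Z. A = cl(A + C)}, empty set included.\<close>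
definition upper_closed_sets :: "'z::topological_real_vector set \<Rightarrow> 'z set set" where
  "upper_closed_sets C = {A. A = closure {a + c | a c. a \<in> A \<and> c \<in> C}}"

text \<open>Scalarization, with inf over the empty set = +\<infinity>.\<close>
definition scalarization :: "('x \<Rightarrow> 'z::topological_real_vector set) \<Rightarrow> ('z \<Rightarrow> real) \<Rightarrow> 'x \<Rightarrow> ereal" where
  "scalarization f zs x = (INF z\<in>f x. ereal (- zs z))"

definition hausdorff_upper_continuous_at ::
  "('x::topological_space \<Rightarrow> 'z::topological_real_vector set) \<Rightarrow> 'x \<Rightarrow> bool" where
  "hausdorff_upper_continuous_at f x0 \<longleftrightarrow>
     (\<forall>V. (\<exists>W. open W \<and> 0 \<in> W \<and> W \<subseteq> V) \<longrightarrow>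
        (\<exists>U. (\<exists>G. open G \<and> x0 \<in> G \<and> G \<subseteq> U) \<and>
             (\<forall>x\<in>U. f x \<subseteq> {a + v | a v. a \<in> f x0 \<and> v \<in> V})))"

definition lsc_at_point :: "('x::topological_space \<Rightarrow> ereal) \<Rightarrow> 'x \<Rightarrow> bool" where
  "lsc_at_point g x0 \<longleftrightarrow> (\<forall>y. y < g x0 \<longrightarrow> eventually (\<lambda>x. y < g x) (nhds x0))"

end

theory Submission
  imports Defs
begin

theorem mainTheorem14:
  fixes f :: "'x::topological_real_vector \<Rightarrow> 'z::topological_real_vector set"
    and C :: "'z set" and x0 :: 'x
  assumes "C \<noteq> {}" and "closed C" and "convex C" and "cone C"
    and "neg_polar C \<noteq> {(\<lambda>_. 0)}"
    and "\<forall>x. f x \<in> upper_closed_sets C"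
    and "hausdorff_upper_continuous_at f x0"
  shows "\<forall>zs \<in> topo_dual. lsc_at_point (scalarization f zs) x0"
proof (intro ballI)
  fix zs :: "'z \<Rightarrow> real" assume zs: "zs \<in> topo_dual"
  hence lin: "linear zs" and cont: "continuous_on UNIV zs" by (auto simp: topo_dual_def)
  have z0: "zs 0 = 0" using lin by (simp add: linear_0)
  show "lsc_at_point (scalarization f zs) x0"
    unfolding lsc_at_point_def
  proof (intro allI impI)
    fix y assume y: "y < scalarization f zs x0"
    obtain c2 where c2: "y < ereal c2" "ereal c2 < scalarization f zs x0"
      using ereal_dense2[OF y] by blast
    obtain c1 where c1: "y < ereal c1" "ereal c1 < ereal c2"
      using ereal_dense2[OF c2(1)] by blast
    hence c12: "c1 < c2" by simp
    define V where "V = zs -` {..<c2 - c1}"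
    have oV: "open V" unfolding V_def by (rule open_vimage[OF open_lessThan cont])
    have "0 \<in> V" unfolding V_def using z0 c12 by simp
    hence "\<exists>W. open W \<and> 0 \<in> W \<and> W \<subseteq> V" using oV by blast
    hence "\<exists>U. (\<exists>G. open G \<and> x0 \<in> G \<and> G \<subseteq> U) \<and>
             (\<forall>x\<in>U. f x \<subseteq> {a + v | a v. a \<in> f x0 \<and> v \<in> V})"
      using assms(7)[unfolded hausdorff_upper_continuous_at_def, rule_format, of V] by simp
    then obtain U G where G: "open G" "x0 \<in> G" "G \<subseteq> U"
      and U: "\<forall>x\<in>U. f x \<subseteq> {a + v | a v. a \<in> f x0 \<and> v \<in> V}"
      by auto
    have "\<forall>x\<in>G. y < scalarization f zs x"
    proof
      fix x assume "x \<in> G"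
      hence sub: "f x \<subseteq> {a + v | a v. a \<in> f x0 \<and> v \<in> V}" using U G by blast
      have "ereal c1 \<le> scalarization f zs x"
        unfolding scalarization_def
      proof (rule INF_greatest)
        fix z assume "z \<in> f x"
        then obtain a v where av: "z = a + v" "a \<in> f x0" "v \<in> V" using sub by blast
        have "scalarization f zs x0 \<le> ereal (- zs a)"
          unfolding scalarization_def using av(2) by (rule INF_lower)
        hence "ereal c2 < ereal (- zs a)" using c2(2) by (rule order.strict_trans2[rotated])
        hence "c2 < - zs a" by simp
        moreover have "zs v < c2 - c1" using av(3) unfolding V_def by simp
        moreover have "zs z = zs a + zs v" using av(1) lin by (simp add: linear_add)
        ultimately have "c1 \<le> - zs z" by linarith
        thus "ereal c1 \<le> ereal (- zs z)" by simp
      qed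
      thus "y < scalarization f zs x" using c1(1) by simp
    qed
    thus "eventually (\<lambda>x. y < scalarization f zs x) (nhds x0)"
      unfolding eventually_nhds using G by blast
  qed
qed

end
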